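(* A class $\mathcal C$ of finite graphs has bounded expansion if and only if for every $r\in\mathbb N$ we have $\sup_{G\in\mathcal C}\mathrm{copw}_r(G)<\infty$.
   Context: Graphs are finite, simple, undirected. For a graph $G$ and $r\in\mathbb N$, $\tilde\nabla_r(G)$ is the maximum of $2|E(H)|/|V(H)|$ over all graphs $H$ such that some graph obtained from $H$ by replacing every edge by a path of length at most $r+1$ is a subgraph of $G$. A class $\mathcal C$ has bounded expansion if $\sup_{G\in\mathcal C}\tilde\nabla_r(G)<\infty$ for every $r$. The Cops and Robber game of radius $r$ and width $k$ on $G$: let $S_0=\emptyset$ and the robber choose $v_0\in V(G)$; in round $i\ge1$ the cops announce $S_i\subseteq V(G)$, $|S_i|\le k$, and the robber moves from $v_{i-1}$ to $v_i$ along a path of length at most $r$ (length $0$ allowed) avoiding $S_{i-1}\cap S_i$; the cops win if $v_i\in S_i$ for some $i$. $\mathrm{copw}_r(G)$ is the least $k$ such that the cops have a winning strategy. *)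

theory Defs
  imports Complex_Main
begin

type_synonym 'a graph = "'a set \<times> 'a set set"

definition verts :: "'a graph \<Rightarrow> 'a set" where "verts G = fst G"
definition edges :: "'a graph \<Rightarrow> 'a set set" where "edges G = snd G"

definition is_graph :: "'a graph \<Rightarrow> bool" where
  "is_graph G \<longleftrightarrow> finite (verts G) \<and>
     (\<forall>e\<in>edges G. \<exists>u v. e = {u, v} \<and> u \<noteq> v \<and> u \<in> verts G \<and> v \<in> verts G)"

definition is_path :: "'a graph \<Rightarrow> 'a list \<Rightarrow> bool" where
  "is_path G p \<longleftrightarrow> p \<noteq> [] \<and> distinct p \<and> set p \<subseteq> verts G \<and>
     (\<forall>i. Suc i < length p \<longrightarrow> {p ! i, p ! Suc i} \<in> edges G)"

definition path_len :: "'a list \<Rightarrow> nat" where "path_len p = length p - 1"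

definition inner_verts :: "'a list \<Rightarrow> 'a set" where
  "inner_verts p = set (butlast (tl p))"

text \<open>(VH, EH) is a graph H some subdivision of which, replacing every edge by a
path of length at most r+1, is a subgraph of G. Without loss of generality the
branch vertices of H are identified with their images in G.\<close>

definition shallow_top_minor :: "nat \<Rightarrow> 'a graph \<Rightarrow> 'a graph \<Rightarrow> bool" where
  "shallow_top_minor r G H \<longleftrightarrow> is_graph H \<and> verts H \<subseteq> verts G \<and>
     (\<exists>P :: 'a set \<Rightarrow> 'a list.
        (\<forall>e\<in>edges H. is_path G (P e) \<and> {hd (P e), last (P e)} = e \<and>
                      path_len (P e) \<le> r + 1 \<and> inner_verts (P e) \<inter> verts H = {}) \<and>
        (\<forall>e\<in>edges H. \<forall>f\<in>edges H. e \<noteq> f \<longrightarrow> inner_verts (P e) \<inter> inner_verts (P f) = {}))"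

definition top_grad :: "nat \<Rightarrow> 'a graph \<Rightarrow> real" where
  "top_grad r G = Max ({0} \<union> {2 * real (card (edges H)) / real (card (verts H)) | H.
                               shallow_top_minor r G H \<and> verts H \<noteq> {}})"

definition bounded_expansion :: "'a graph set \<Rightarrow> bool" where
  "bounded_expansion C \<longleftrightarrow> (\<forall>r::nat. \<exists>c::real. \<forall>G\<in>C. top_grad r G \<le> c)"

text \<open>A cop strategy maps the
history of robber positions [v_0, ..., v_{i-1}] to the set S_i.\<close>

definition cop_set :: "('a list \<Rightarrow> 'a set) \<Rightarrow> (nat \<Rightarrow> 'a) \<Rightarrow> nat \<Rightarrow> 'a set" where
  "cop_set \<sigma> v i = (if i = 0 then {} else \<sigma> (map v [0..<i]))"

definition robber_move :: "'a graph \<Rightarrow> nat \<Rightarrow> 'a set \<Rightarrow> 'a \<Rightarrow> 'a \<Rightarrow> bool" where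
  "robber_move G r X x y \<longleftrightarrow> (\<exists>p. is_path G p \<and> hd p = x \<and> last p = y \<and>
                                  path_len p \<le> r \<and> set p \<inter> X = {})"

definition consistent_play :: "'a graph \<Rightarrow> nat \<Rightarrow> ('a list \<Rightarrow> 'a set) \<Rightarrow> (nat \<Rightarrow> 'a) \<Rightarrow> bool" where
  "consistent_play G r \<sigma> v \<longleftrightarrow> v 0 \<in> verts G \<and>
     (\<forall>i\<ge>1. robber_move G r (cop_set \<sigma> v (i - 1) \<inter> cop_set \<sigma> v i) (v (i - 1)) (v i))"

definition cops_win :: "nat \<Rightarrow> nat \<Rightarrow> 'a graph \<Rightarrow> bool" where
  "cops_win r k G \<longleftrightarrow> (\<exists>\<sigma> :: 'a list \<Rightarrow> 'a set.
     (\<forall>h. \<sigma> h \<subseteq> verts G \<and> card (\<sigma> h) \<le> k) \<and>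
     (\<forall>v. consistent_play G r \<sigma> v \<longrightarrow> (\<exists>i\<ge>1. v i \<in> cop_set \<sigma> v i)))"

definition copw :: "nat \<Rightarrow> 'a graph \<Rightarrow> nat" where
  "copw r G = (LEAST k. cops_win r k G)"

end

theory Submission
  imports Defs
begin


abbreviation adj :: "'a graph \<Rightarrow> 'a \<Rightarrow> 'a \<Rightarrow> bool" where
  "adj G x y \<equiv> {x, y} \<in> edges G"

lemma is_path_alt:
  "is_path G p \<longleftrightarrow> p \<noteq> [] \<and> distinct p \<and> set p \<subseteq> verts G \<and> successively (adj G) p"
  unfolding is_path_def successively_conv_nth by auto

lemma inner_verts_iff:
  "x \<in> inner_verts p \<longleftrightarrow> (\<exists>i. 0 < i \<and> i < length p - 1 \<and> p ! i = x)"
proof -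
  have "x \<in> inner_verts p \<longleftrightarrow> (\<exists>i<length (butlast (tl p)). butlast (tl p) ! i = x)"
    unfolding inner_verts_def in_set_conv_nth by simp
  also have "\<dots> \<longleftrightarrow> (\<exists>i. 0 < i \<and> i < length p - 1 \<and> p ! i = x)"
  proof
    assume "\<exists>i<length (butlast (tl p)). butlast (tl p) ! i = x"
    then obtain i where "i<length (butlast (tl p))" "butlast (tl p) ! i = x" by blast
    then show "\<exists>i. 0 < i \<and> i < length p - 1 \<and> p ! i = x"
      by (intro exI[of _ "Suc i"]) (auto simp: nth_butlast nth_tl)
  next
    assume "\<exists>i. 0 < i \<and> i < length p - 1 \<and> p ! i = x"
    then obtain i where "0 < i" "i < length p - 1" "p ! i = x" by blast
    then show "\<exists>i<length (butlast (tl p)). butlast (tl p) ! i = x"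
      by (intro exI[of _ "i - 1"]) (auto simp: nth_butlast nth_tl)
  qed
  finally show ?thesis .
qed

lemma set_path_split:
  "p \<noteq> [] \<Longrightarrow> set p = insert (hd p) (insert (last p) (inner_verts p))"
proof (cases p)
  case (Cons a xs)
  show ?thesis
  proof (cases xs rule: rev_exhaust)
    case Nil
    then show ?thesis using Cons by (simp add: inner_verts_def)
  next
    case (snoc ys y)
    then show ?thesis using Cons by (auto simp: inner_verts_def)
  qed
qed simp

lemma card_inner_verts: "card (inner_verts p) \<le> path_len p"
  unfolding inner_verts_def path_len_def
  by (metis card_length diff_le_self length_butlast length_tl order.trans)

lemma path_len_ge1_hd_last:
  assumes "is_path G p" "1 \<le> path_len p" shows "hd p \<noteq> last p"
proof -
  have "length p \<ge> 2" using assms unfolding path_len_def by auto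
  then have ne: "p \<noteq> []" by auto
  then have "hd p = p ! 0" "last p = p ! (length p - 1)"
    by (simp_all add: hd_conv_nth last_conv_nth)
  moreover have "distinct p" using assms(1) unfolding is_path_def by auto
  moreover have l: "0 < length p" "length p - 1 < length p" "0 \<noteq> length p - 1"
    using \<open>length p \<ge> 2\<close> by auto
  moreover have "p ! 0 \<noteq> p ! (length p - 1)"
    using nth_eq_iff_index_eq[OF \<open>distinct p\<close> l(1) l(2)] l(3) by simp
  ultimately show ?thesis by simp
qed

lemma is_path_take:
  assumes "is_path G p" "0 < n" shows "is_path G (take n p)"
  using assms unfolding is_path_def
  by (auto dest: in_set_takeD)

lemma is_path_drop:
  assumes "is_path G p" "n < length p" shows "is_path G (drop n p)"
  using assms unfolding is_path_def
  by (auto dest: in_set_dropD simp: add.commute add_Suc_right)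

lemma is_path_rev:
  assumes "is_path G p" shows "is_path G (rev p)"
  using assms unfolding is_path_alt by (auto simp: insert_commute)

lemma is_path_single: "x \<in> verts G \<Longrightarrow> is_path G [x]"
  unfolding is_path_def by auto

definition is_walk :: "'a graph \<Rightarrow> 'a list \<Rightarrow> bool" where
  "is_walk G w \<longleftrightarrow> w \<noteq> [] \<and> set w \<subseteq> verts G \<and> successively (adj G) w"

lemma walk_to_path:
  assumes "is_walk G w"
  shows "\<exists>p. is_path G p \<and> hd p = hd w \<and> last p = last w \<and> length p \<le> length w \<and> set p \<subseteq> set w"
  using assms
proof (induction w rule: length_induct)
  case (1 w)
  show ?case
  proof (cases "distinct w")
    case True
    then show ?thesis using 1(2) unfolding is_walk_def is_path_alt by auto
  next
    case False
    then obtain xs ys zs y where w: "w = xs@[y]@ys@[y]@zs" using not_distinct_decomp by blast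
    define w' where "w' = xs @ y # zs"
    have s: "successively (adj G) w" using 1(2) unfolding is_walk_def by auto
    have s1: "successively (adj G) (xs @ [y])"
      using s unfolding w by (simp add: successively_append_iff)
    have s2: "successively (adj G) (y # zs)"
      using s unfolding w by (simp add: successively_append_iff successively_Cons)
    have "successively (adj G) w'"
      using s1 s2 unfolding w'_def
      using successively_append_iff[of "adj G" "xs @ [y]" zs]
      by (auto simp: successively_Cons)
    then have "is_walk G w'" using 1(2) unfolding is_walk_def w'_def w by auto
    moreover have "length w' < length w" unfolding w w'_def by simp
    ultimately obtain p where p: "is_path G p" "hd p = hd w'" "last p = last w'" "length p \<le> length w'" "set p \<subseteq> set w'"
      using 1(1) by blast
    have "hd w' = hd w" "last w' = last w" unfolding w w'_def
      by (cases xs; simp; cases zs; simp)+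
    moreover have "set w' \<subseteq> set w" unfolding w w'_def by auto
    ultimately show ?thesis using p \<open>length w' < length w\<close> by (intro exI[of _ p]) auto
  qed
qed



lemma kcore:
  fixes V :: "'a set" and E :: "'a set set"
  assumes "finite V" "\<forall>e\<in>E. \<exists>u v. e = {u,v} \<and> u \<noteq> v \<and> u \<in> V \<and> v \<in> V"
    "card E > K * card V"
  shows "\<exists>W\<subseteq>V. W \<noteq> {} \<and> (\<forall>w\<in>W. card {y\<in>W. {w,y} \<in> E} > K)"
  using assms
proof (induction "card V" arbitrary: V E rule: less_induct)
  case less
  have finE: "finite E"
    using less.prems(1,2) by (intro finite_subset[of E "Pow V"]) auto
  show ?case
  proof (cases "\<forall>w\<in>V. card {y\<in>V. {w,y}\<in>E} > K")
    case True
    have "E \<noteq> {}" using less.prems(3) by auto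
    then have "V \<noteq> {}" using less.prems(2) by auto
    then show ?thesis using True by blast
  next
    case False
    then obtain w where w: "w \<in> V" "card {y\<in>V. {w,y}\<in>E} \<le> K" by auto
    define V' where "V' = V - {w}"
    define E' where "E' = {e\<in>E. w \<notin> e}"
    have sub: "{e\<in>E. w\<in>e} \<subseteq> (\<lambda>y. {w,y}) ` {y\<in>V. {w,y}\<in>E}"
    proof
      fix e assume e: "e \<in> {e\<in>E. w\<in>e}"
      then obtain u v where uv: "e = {u,v}" "u \<noteq> v" "u \<in> V" "v \<in> V" using less.prems(2) by blast
      show "e \<in> (\<lambda>y. {w,y}) ` {y\<in>V. {w,y}\<in>E}"
      proof (cases "w = u")
        case True
        then show ?thesis using e uv by (intro image_eqI[of _ _ v]) auto
      next
        case False
        then have "w = v" using e uv by auto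
        then show ?thesis using e uv by (intro image_eqI[of _ _ u]) (auto simp: insert_commute)
      qed
    qed
    have ci: "card ((\<lambda>y. {w,y}) ` {y\<in>V. {w,y}\<in>E}) \<le> card {y\<in>V. {w,y}\<in>E}"
      by (rule card_image_le) (use less.prems(1) in simp)
    have c1: "card {e\<in>E. w\<in>e} \<le> K"
      by (rule order.trans[OF card_mono[OF _ sub]]) (use w ci less.prems(1) in auto)
    have "E = E' \<union> {e\<in>E. w\<in>e}" unfolding E'_def by auto
    then have "card E \<le> card E' + card {e\<in>E. w\<in>e}" by (metis card_Un_le)
    then have cE: "card E \<le> card E' + K" using c1 by simp
    have cV: "card V' = card V - 1" unfolding V'_def using w less.prems(1) by simp
    have "card V \<ge> 1" using w less.prems(1) by (metis One_nat_def Suc_leI card_gt_0_iff empty_iff)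
    then have eq: "K * card V' = K * card V - K" using cV by (simp add: diff_mult_distrib2)
    have "K * card V < card E' + K" using cE less.prems(3) by linarith
    moreover have "K \<le> K * card V" using \<open>card V \<ge> 1\<close> by simp
    ultimately have "K * card V - K < card E'" using less_diff_conv2[of K "K * card V" "card E'"] by simp
    then have "card E' > K * card V'" using eq by simp
    moreover have "card V' < card V" using cV \<open>card V \<ge> 1\<close> by simp
    moreover have "finite V'" using less.prems(1) V'_def by simp
    moreover have "\<forall>e\<in>E'. \<exists>u v. e = {u,v} \<and> u \<noteq> v \<and> u \<in> V' \<and> v \<in> V'"
      using less.prems(2) unfolding E'_def V'_def by fastforce
    ultimately have "\<exists>W\<subseteq>V'. W \<noteq> {} \<and> (\<forall>w\<in>W. card {y\<in>W. {w,y} \<in> E'} > K)"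
      by (intro less.hyps) auto
    then obtain W where W: "W \<subseteq> V'" "W \<noteq> {}" "\<forall>x\<in>W. card {y\<in>W. {x,y} \<in> E'} > K"
      by blast
    have "\<forall>x\<in>W. card {y\<in>W. {x,y} \<in> E} > K"
    proof
      fix x assume "x \<in> W"
      have "card {y\<in>W. {x,y} \<in> E'} \<le> card {y\<in>W. {x,y} \<in> E}"
      proof (rule card_mono)
        have "finite W" by (rule finite_subset[OF W(1)]) (simp add: V'_def less.prems(1))
        then show "finite {y\<in>W. {x,y} \<in> E}" by (rule finite_subset[rotated]) auto
        show "{y\<in>W. {x,y} \<in> E'} \<subseteq> {y\<in>W. {x,y} \<in> E}" unfolding E'_def by auto
      qed
      then show "card {y\<in>W. {x,y} \<in> E} > K" using W(3) \<open>x \<in> W\<close> by fastforce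
    qed
    then show ?thesis using W V'_def by blast
  qed
qed

primrec hist :: "('a list \<Rightarrow> 'a) \<Rightarrow> 'a \<Rightarrow> nat \<Rightarrow> 'a list" where
  "hist f a 0 = [a]"
| "hist f a (Suc n) = hist f a n @ [f (hist f a n)]"

lemma hist_map: "hist f a n = map (\<lambda>i. last (hist f a i)) [0..<Suc n]"
proof (induction n)
  case 0
  then show ?case by simp
next
  case (Suc n)
  have e: "hist f a (Suc n) = hist f a n @ [last (hist f a (Suc n))]" by simp
  show ?case by (subst e, subst Suc.IH) (simp del: hist.simps)
qed

lemma cops_win_all:
  assumes "is_graph G" shows "cops_win r (card (verts G)) G"
  unfolding cops_win_def
proof (intro exI[of _ "\<lambda>h. verts G"] conjI allI impI)
  fix v assume "consistent_play G r (\<lambda>h. verts G) v"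
  then have "robber_move G r (cop_set (\<lambda>h. verts G) v 0 \<inter> cop_set (\<lambda>h. verts G) v 1) (v 0) (v 1)"
    unfolding consistent_play_def by (metis diff_Suc_1 le_refl One_nat_def)
  then obtain p where "is_path G p" "last p = v 1" unfolding robber_move_def by blast
  then have "v 1 \<in> verts G" unfolding is_path_def using last_in_set by fastforce
  then show "\<exists>i\<ge>1. v i \<in> cop_set (\<lambda>h. verts G) v i" by (intro exI[of _ 1]) (auto simp: cop_set_def)
qed auto

lemma robber_wins:
  assumes G: "is_graph G" and H: "shallow_top_minor r G H"
    and W: "W \<subseteq> verts H" "w0 \<in> W" "\<forall>w\<in>W. card {y\<in>W. {w,y} \<in> edges H} > K" and "k \<le> K"
  shows "\<not> cops_win (Suc r) k G"
proof
  assume "cops_win (Suc r) k G"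
  then obtain \<sigma> where \<sigma>: "\<forall>h. \<sigma> h \<subseteq> verts G \<and> card (\<sigma> h) \<le> k"
    and win: "\<forall>v. consistent_play G (Suc r) \<sigma> v \<longrightarrow> (\<exists>i\<ge>1. v i \<in> cop_set \<sigma> v i)"
    unfolding cops_win_def by blast
  have Hg: "is_graph H" and HV: "verts H \<subseteq> verts G" using H unfolding shallow_top_minor_def by auto
  obtain P where P: "\<forall>e\<in>edges H. is_path G (P e) \<and> {hd (P e), last (P e)} = e \<and>
                      path_len (P e) \<le> r + 1 \<and> inner_verts (P e) \<inter> verts H = {}"
    and Pd: "\<forall>e\<in>edges H. \<forall>f\<in>edges H. e \<noteq> f \<longrightarrow> inner_verts (P e) \<inter> inner_verts (P f) = {}"
    using H unfolding shallow_top_minor_def by blast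
  define orient where "orient x y = (if hd (P {x,y}) = x then P {x,y} else rev (P {x,y}))" for x y
  have edge_ne: "x \<noteq> y" if "{x,y} \<in> edges H" for x y
    using Hg that unfolding is_graph_def by (metis doubleton_eq_iff)
  have or: "is_path G (orient x y) \<and> hd (orient x y) = x \<and> last (orient x y) = y \<and>
      path_len (orient x y) \<le> Suc r \<and> set (orient x y) = insert x (insert y (inner_verts (P {x,y})))"
    if "{x,y} \<in> edges H" for x y
  proof -
    have p: "is_path G (P {x,y})" "{hd (P {x,y}), last (P {x,y})} = {x,y}" "path_len (P {x,y}) \<le> r + 1"
      using P that by auto
    have ne: "P {x,y} \<noteq> []" using p(1) unfolding is_path_def by auto
    have "x \<noteq> y" using edge_ne that .
    show ?thesis
    proof (cases "hd (P {x,y}) = x")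
      case True
      then have "last (P {x,y}) = y" using p(2) \<open>x\<noteq>y\<close> by (metis doubleton_eq_iff)
      then show ?thesis using True p ne set_path_split[OF ne] unfolding orient_def by auto
    next
      case False
      then have "hd (P {x,y}) = y" "last (P {x,y}) = x" using p(2) by (metis doubleton_eq_iff)+
      then show ?thesis using False p ne set_path_split[OF ne] is_path_rev[OF p(1)]
        unfolding orient_def by (auto simp: hd_rev last_rev path_len_def)
    qed
  qed
  define good where "good S x y \<longleftrightarrow> y \<in> W \<and> {x,y} \<in> edges H \<and> set (orient x y) \<inter> (S - {x}) = {}"
    for S x y
  have ex_good: "\<exists>y. good S x y" if "x \<in> W" "finite S" "card S \<le> K" for S x
  proof (rule ccontr)
    assume nog: "\<not> (\<exists>y. good S x y)"
    define N where "N = {y\<in>W. {x,y} \<in> edges H}"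
    define f where "f y = (SOME z. z \<in> set (orient x y) \<inter> (S - {x}))" for y
    have fN: "f y \<in> set (orient x y) \<inter> (S - {x})" if "y \<in> N" for y
    proof -
      have "set (orient x y) \<inter> (S - {x}) \<noteq> {}" using nog that unfolding good_def N_def by auto
      then show ?thesis unfolding f_def by (metis (no_types, lifting) ex_in_conv someI_ex)
    qed
    have "inj_on f N"
    proof
      fix y y' assume y: "y \<in> N" "y' \<in> N" "f y = f y'"
      show "y = y'"
      proof (rule ccontr)
        assume "y \<noteq> y'"
        have e: "{x,y} \<in> edges H" "{x,y'} \<in> edges H" using y N_def by auto
        have "{x,y} \<noteq> {x,y'}" using \<open>y \<noteq> y'\<close> by (metis doubleton_eq_iff)
        then have dj: "inner_verts (P {x,y}) \<inter> inner_verts (P {x,y'}) = {}" using Pd e by auto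
        have i1: "inner_verts (P {x,y}) \<inter> verts H = {}" "inner_verts (P {x,y'}) \<inter> verts H = {}"
          using P e by auto
        have yv: "y \<in> verts H" "y' \<in> verts H" using y W N_def by auto
        have "f y \<in> insert y (inner_verts (P {x,y}))" "f y \<in> insert y' (inner_verts (P {x,y'}))"
          using fN[OF y(1)] fN[OF y(2)] or[OF e(1)] or[OF e(2)] y(3) by auto
        then show False using dj i1 yv \<open>y \<noteq> y'\<close> by auto
      qed
    qed
    moreover have "f ` N \<subseteq> S" using fN by auto
    ultimately have "card N \<le> card S" using that(2) by (metis card_inj_on_le)
    then show False using that W(3) N_def by fastforce
  qed
  define step where "step h = (if last h \<notin> \<sigma> h then last h else (SOME y. good (\<sigma> h) (last h) y))" for h
  define v where "v i = last (hist step w0 i)" for i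
  have hv: "hist step w0 n = map v [0..<Suc n]" for n unfolding v_def by (rule hist_map)
  have vS: "v (Suc n) = step (map v [0..<Suc n])" for n
    using hv[of n] by (simp add: v_def)
  have lastm: "last (map v [0..<Suc n]) = v n" for n by simp
  have cs: "cop_set \<sigma> v (Suc n) = \<sigma> (map v [0..<Suc n])" for n by (simp add: cop_set_def)
  have finG: "finite (verts G)" using G unfolding is_graph_def by auto
  have finS: "finite (\<sigma> h)" for h using \<sigma> finG finite_subset by metis
  have inv: "v n \<in> W \<and> v n \<notin> cop_set \<sigma> v n" for n
  proof (induction n)
    case 0
    then show ?case using W by (simp add: cop_set_def v_def)
  next
    case (Suc n)
    let ?S = "\<sigma> (map v [0..<Suc n])"
    show ?case
    proof (cases "v n \<in> ?S")
      case False
      then show ?thesis using Suc vS[of n] cs[of n] unfolding step_def lastm by simp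
    next
      case True
      have "\<exists>y. good ?S (v n) y" using ex_good Suc finS \<sigma> \<open>k \<le> K\<close> by (meson order.trans)
      then have g: "good ?S (v n) (v (Suc n))" using vS[of n] True unfolding step_def lastm
        by (simp add: someI_ex)
      then have "{v n, v (Suc n)} \<in> edges H" unfolding good_def by auto
      then have "v (Suc n) \<noteq> v n" using edge_ne by metis
      moreover have "v (Suc n) \<in> set (orient (v n) (v (Suc n)))" using or[OF \<open>{v n, v (Suc n)} \<in> edges H\<close>] by auto
      ultimately show ?thesis using g cs[of n] unfolding good_def by auto
    qed
  qed
  have "consistent_play G (Suc r) \<sigma> v"
    unfolding consistent_play_def
  proof (intro conjI allI impI)
    show "v 0 \<in> verts G" using inv[of 0] W HV by auto
    fix i :: nat assume "1 \<le> i"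
    then obtain n where i: "i = Suc n" by (cases i) auto
    let ?S = "\<sigma> (map v [0..<Suc n])"
    have vG: "v n \<in> verts G" using inv[of n] W HV by auto
    show "robber_move G (Suc r) (cop_set \<sigma> v (i - 1) \<inter> cop_set \<sigma> v i) (v (i - 1)) (v i)"
    proof (cases "v n \<in> ?S")
      case False
      then have "v (Suc n) = v n" using vS[of n] unfolding step_def lastm by simp
      then show ?thesis unfolding robber_move_def i using False is_path_single[OF vG] cs[of n]
        by (intro exI[of _ "[v n]"]) (auto simp: path_len_def)
    next
      case True
      have "\<exists>y. good ?S (v n) y" using ex_good inv finS \<sigma> \<open>k \<le> K\<close> by (meson order.trans)
      then have g: "good ?S (v n) (v (Suc n))" using vS[of n] True unfolding step_def lastm
        by (simp add: someI_ex)
      then have e: "{v n, v (Suc n)} \<in> edges H" unfolding good_def by auto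
      show ?thesis unfolding robber_move_def i
        using or[OF e] g inv[of n] cs[of n] unfolding good_def
        by (intro exI[of _ "orient (v n) (v (Suc n))"]) auto
    qed
  qed
  then obtain i where "i \<ge> 1" "v i \<in> cop_set \<sigma> v i" using win by blast
  then show False using inv[of i] by simp
qed

lemma finite_stm:
  assumes "is_graph G" shows "finite {H. shallow_top_minor r G H}"
proof (rule finite_subset[of _ "Pow (verts G) \<times> Pow (Pow (verts G))"])
  show "{H. shallow_top_minor r G H} \<subseteq> Pow (verts G) \<times> Pow (Pow (verts G))"
  proof
    fix H assume "H \<in> {H. shallow_top_minor r G H}"
    then have "is_graph H" "verts H \<subseteq> verts G" unfolding shallow_top_minor_def by auto
    then have "fst H \<subseteq> verts G" "snd H \<subseteq> Pow (verts G)" unfolding is_graph_def verts_def edges_def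
      by fastforce+
    then show "H \<in> Pow (verts G) \<times> Pow (Pow (verts G))" by (cases H) auto
  qed
  show "finite (Pow (verts G) \<times> Pow (Pow (verts G)))" using assms unfolding is_graph_def by auto
qed

definition tgS :: "nat \<Rightarrow> 'a graph \<Rightarrow> real set" where
  "tgS r G = (\<lambda>H. 2 * real (card (edges H)) / real (card (verts H))) ` {H. shallow_top_minor r G H \<and> verts H \<noteq> {}}"

lemma top_grad_alt: "top_grad r G = Max ({0} \<union> tgS r G)"
  unfolding top_grad_def tgS_def by (rule arg_cong[where f=Max]) blast

lemma top_grad_set_finite:
  assumes "is_graph G"
  shows "finite ({0} \<union> tgS r G)"
proof -
  have "finite {H. shallow_top_minor r G H \<and> verts H \<noteq> {}}"
    using finite_stm[OF assms] by (rule rev_finite_subset) auto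
  then show ?thesis unfolding tgS_def by simp
qed

lemma top_grad_ge:
  assumes "is_graph G" "shallow_top_minor r G H" "verts H \<noteq> {}"
  shows "2 * real (card (edges H)) / real (card (verts H)) \<le> top_grad r G"
  unfolding top_grad_alt using top_grad_set_finite[OF assms(1)] assms
  by (intro Max_ge) (auto simp: tgS_def)

lemma top_grad_nonneg: assumes "is_graph G" shows "0 \<le> top_grad r G"
  unfolding top_grad_alt using top_grad_set_finite[OF assms, of r] by (intro Max_ge) auto

lemma top_grad_le_of_copw:
  assumes G: "is_graph G" and c: "copw (Suc r) G \<le> K"
  shows "top_grad r G \<le> 2 * real K"
proof -
  have cw: "cops_win (Suc r) (copw (Suc r) G) G"
    unfolding copw_def using cops_win_all[OF G] by (rule LeastI)
  have "2 * real (card (edges H)) / real (card (verts H)) \<le> 2 * real K"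
    if H: "shallow_top_minor r G H" "verts H \<noteq> {}" for H
  proof -
    have Hg: "is_graph H" using H unfolding shallow_top_minor_def by auto
    have "card (edges H) \<le> K * card (verts H)"
    proof (rule ccontr)
      assume "\<not> card (edges H) \<le> K * card (verts H)"
      then obtain W where "W \<subseteq> verts H" "W \<noteq> {}" "\<forall>w\<in>W. card {y\<in>W. {w,y} \<in> edges H} > K"
        using kcore[of "verts H" "edges H" K] Hg unfolding is_graph_def by auto
      then show False using robber_wins[OF G H(1), of W _ K] c cw by blast
    qed
    moreover have "card (verts H) > 0" using Hg H(2) card_gt_0_iff unfolding is_graph_def by blast
    ultimately show ?thesis
      by (simp add: divide_le_eq) (metis of_nat_le_iff of_nat_mult mult.commute)
  qed
  then show ?thesis unfolding top_grad_alt using top_grad_set_finite[OF G]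
    by (subst Max_le_iff) (auto simp: tgS_def)
qed



primrec cf :: "real \<Rightarrow> nat \<Rightarrow> real" where
  "cf d 0 = 0"
| "cf d (Suc l) = 3 * d / 2 + cf d l * (1 + real (Suc l) * d / 2)"

lemma cf_nonneg: "0 \<le> d \<Longrightarrow> 0 \<le> cf d l"
  by (induction l) auto

definition fanfam :: "'a graph \<Rightarrow> nat \<Rightarrow> 'a set \<Rightarrow> 'a list set \<Rightarrow> bool" where
  "fanfam G l K \<Psi> \<longleftrightarrow> finite \<Psi> \<and>
    (\<forall>P\<in>\<Psi>. is_path G P \<and> 1 \<le> path_len P \<and> path_len P \<le> l \<and> hd P \<in> K \<and> last P \<in> K \<and>
       inner_verts P \<inter> K = {}) \<and>
    (\<forall>P\<in>\<Psi>. \<forall>Q\<in>\<Psi>. P \<noteq> Q \<and> hd P = hd Q \<longrightarrow> set P \<inter> set Q = {hd P})"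

lemma last_take_Suc: "j < length P \<Longrightarrow> last (take (Suc j) P) = P ! j"
  by (simp add: take_Suc_conv_app_nth)

lemma fan_lemma:
  assumes G: "is_graph G" and d: "top_grad \<rho> G \<le> d"
  shows "l \<le> Suc \<rho> \<Longrightarrow> finite K \<Longrightarrow> K \<subseteq> verts G \<Longrightarrow> fanfam G l K \<Psi> \<Longrightarrow>
         real (card \<Psi>) \<le> cf d l * real (card K)"
proof (induction l arbitrary: K \<Psi>)
  case 0
  then have "\<Psi> = {}" unfolding fanfam_def by auto
  then show ?case by simp
next
  case (Suc l)
  have d0: "0 \<le> d" using top_grad_nonneg[OF G, of \<rho>] d by linarith
  have finPsi: "finite \<Psi>" and PsiP: "\<And>P. P \<in> \<Psi> \<Longrightarrow> is_path G P \<and> 1 \<le> path_len P \<and> path_len P \<le> Suc l \<and>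
       hd P \<in> K \<and> last P \<in> K \<and> inner_verts P \<inter> K = {}"
    and Psid: "\<And>P Q. P \<in> \<Psi> \<Longrightarrow> Q \<in> \<Psi> \<Longrightarrow> P \<noteq> Q \<Longrightarrow> hd P = hd Q \<Longrightarrow> set P \<inter> set Q = {hd P}"
    using Suc.prems(4) unfolding fanfam_def by blast+
  show ?case
  proof (cases "K = {}")
    case True
    then have "\<Psi> = {}" using PsiP by blast
    then show ?thesis using True by simp
  next
    case Kne: False
    define pair where "pair P = {hd P, last P}" for P :: "'a list"
    define valid where "valid M \<longleftrightarrow> M \<subseteq> \<Psi> \<and>
       (\<forall>P\<in>M. \<forall>Q\<in>M. P \<noteq> Q \<longrightarrow> pair P \<noteq> pair Q \<and> inner_verts P \<inter> inner_verts Q = {})" for M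
    have "valid {}" unfolding valid_def by auto
    moreover have "\<forall>M. valid M \<longrightarrow> card M < Suc (card \<Psi>)"
      unfolding valid_def using finPsi by (simp add: card_mono less_Suc_eq_le)
    ultimately obtain M where vM: "valid M" and maxM: "\<And>M'. valid M' \<Longrightarrow> card M' \<le> card M"
      using Lattices_Big.ex_has_greatest_nat[of valid "{}" card "Suc (card \<Psi>)"] by blast
    have MPsi: "M \<subseteq> \<Psi>" using vM valid_def by auto
    have finM: "finite M" using MPsi finPsi finite_subset by auto
    have injpair: "inj_on pair M" using vM unfolding valid_def inj_on_def by blast
    define H :: "'a graph" where "H = (K, pair ` M)"
    define Pw where "Pw e = (SOME P. P \<in> M \<and> pair P = e)" for e
    have Pw: "Pw e \<in> M \<and> pair (Pw e) = e" if "e \<in> pair ` M" for e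
      unfolding Pw_def using that by (metis (mono_tags, lifting) imageE someI)
    have stm: "shallow_top_minor \<rho> G H"
      unfolding shallow_top_minor_def
    proof (intro conjI)
      show "is_graph H" unfolding is_graph_def H_def verts_def edges_def
      proof (intro conjI ballI)
        show "finite (fst (K, pair ` M))" using Suc.prems(2) by simp
        fix e assume "e \<in> snd (K, pair ` M)"
        then obtain P where P: "P \<in> M" "e = pair P" by auto
        then have "hd P \<noteq> last P" using PsiP[of P] MPsi path_len_ge1_hd_last by blast
        then show "\<exists>u v. e = {u, v} \<and> u \<noteq> v \<and> u \<in> fst (K, pair ` M) \<and> v \<in> fst (K, pair ` M)"
          using P PsiP[of P] MPsi unfolding pair_def by auto
      qed
      show "verts H \<subseteq> verts G" using Suc.prems(3) unfolding H_def verts_def by simp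
      show "\<exists>P. (\<forall>e\<in>edges H. is_path G (P e) \<and> {hd (P e), last (P e)} = e \<and>
                      path_len (P e) \<le> \<rho> + 1 \<and> inner_verts (P e) \<inter> verts H = {}) \<and>
        (\<forall>e\<in>edges H. \<forall>f\<in>edges H. e \<noteq> f \<longrightarrow> inner_verts (P e) \<inter> inner_verts (P f) = {})"
      proof (rule exI[of _ Pw], rule conjI)
        show "\<forall>e\<in>edges H. is_path G (Pw e) \<and> {hd (Pw e), last (Pw e)} = e \<and>
                      path_len (Pw e) \<le> \<rho> + 1 \<and> inner_verts (Pw e) \<inter> verts H = {}"
        proof
        fix e assume "e \<in> edges H"
        then have e: "e \<in> pair ` M" unfolding H_def edges_def by simp
        have "Pw e \<in> \<Psi>" using Pw[OF e] MPsi by auto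
        then show "is_path G (Pw e) \<and> {hd (Pw e), last (Pw e)} = e \<and>
                      path_len (Pw e) \<le> \<rho> + 1 \<and> inner_verts (Pw e) \<inter> verts H = {}"
          using PsiP[of "Pw e"] Pw[OF e] Suc.prems(1) unfolding pair_def H_def verts_def by auto
        qed
        show "\<forall>e\<in>edges H. \<forall>f\<in>edges H. e \<noteq> f \<longrightarrow> inner_verts (Pw e) \<inter> inner_verts (Pw f) = {}"
        proof (intro ballI impI)
        fix e f assume "e \<in> edges H" "f \<in> edges H" "e \<noteq> f"
        then have e: "e \<in> pair ` M" "f \<in> pair ` M" unfolding H_def edges_def by auto
        then have "Pw e \<noteq> Pw f" using Pw \<open>e \<noteq> f\<close> by metis
        then show "inner_verts (Pw e) \<inter> inner_verts (Pw f) = {}"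
          using vM Pw[OF e(1)] Pw[OF e(2)] unfolding valid_def by blast
        qed
      qed
    qed
    have cardE: "card (edges H) = card M" unfolding H_def edges_def using card_image[OF injpair] by simp
    have vH: "verts H = K" "verts H \<noteq> {}" unfolding H_def verts_def using Kne by auto
    have kpos: "real (card K) > 0" using Kne Suc.prems(2) by (simp add: card_gt_0_iff)
    have "2 * real (card M) / real (card K) \<le> d"
      using top_grad_ge[OF G stm vH(2)] d cardE vH(1) by simp
    then have mbound: "real (card M) \<le> d * real (card K) / 2" using kpos by (simp add: field_simps)
    define F where "F = (\<Union>P\<in>M. inner_verts P)"
    have finF: "finite F" unfolding F_def inner_verts_def using finM by auto
    have "card F \<le> (\<Sum>P\<in>M. card (inner_verts P))" unfolding F_def by (rule card_UN_le[OF finM])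
    also have "\<dots> \<le> (\<Sum>P\<in>M. Suc l)"
      apply (rule sum_mono) using card_inner_verts PsiP MPsi order.trans by blast
    finally have cF: "card F \<le> card M * Suc l" by simp
    define Psia where "Psia = {P\<in>\<Psi> - M. \<exists>Q\<in>M. pair Q = pair P}"
    define Psib where "Psib = {P\<in>\<Psi> - M. \<forall>Q\<in>M. pair Q \<noteq> pair P}"
    have "\<Psi> = M \<union> Psia \<union> Psib" unfolding Psia_def Psib_def using MPsi by blast
    then have c1: "card \<Psi> \<le> card M + card Psia + card Psib"
      by (metis card_Un_le add_le_mono order.trans le_refl)
    define qq where "qq P = (SOME Q. Q \<in> M \<and> pair Q = pair P)" for P
    have qq: "qq P \<in> M \<and> pair (qq P) = pair P" if "P \<in> Psia" for P
      using that unfolding Psia_def qq_def by (metis (mono_tags, lifting) mem_Collect_eq someI)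
    define g where "g P = (qq P, hd P = hd (qq P))" for P
    have "inj_on g Psia"
    proof
      fix P P' assume P: "P \<in> Psia" "P' \<in> Psia" "g P = g P'"
      then have qe: "qq P = qq P'" and be: "(hd P = hd (qq P)) = (hd P' = hd (qq P))" unfolding g_def by auto
      have pp: "pair P = pair P'" using qq[OF P(1)] qq[OF P(2)] qe by simp
      have hdeq: "hd P = hd P'"
      proof (cases "hd P = hd (qq P)")
        case True then show ?thesis using be by simp
      next
        case False
        then have "hd P' \<noteq> hd (qq P)" using be by simp
        moreover have "hd P \<in> pair (qq P)" "hd P' \<in> pair (qq P)"
          using qq[OF P(1)] qq[OF P(2)] qe unfolding pair_def by auto
        ultimately show ?thesis using False unfolding pair_def by auto
      qed
      have lasteq: "last P = last P'" using pp hdeq unfolding pair_def by (metis doubleton_eq_iff)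
      show "P = P'"
      proof (rule ccontr)
        assume "P \<noteq> P'"
        have PP: "P \<in> \<Psi>" "P' \<in> \<Psi>" using P unfolding Psia_def by auto
        then have "set P \<inter> set P' = {hd P}" using Psid \<open>P \<noteq> P'\<close> hdeq by blast
        moreover have "P \<noteq> []" "P' \<noteq> []" using PsiP PP unfolding is_path_def by blast+
        then have "last P \<in> set P \<inter> set P'" using lasteq by (metis IntI last_in_set)
        moreover have "hd P \<noteq> last P" using PsiP[OF PP(1)] path_len_ge1_hd_last by blast
        ultimately show False by auto
      qed
    qed
    moreover have "g ` Psia \<subseteq> M \<times> UNIV" unfolding g_def using qq by auto
    ultimately have "card Psia \<le> card (M \<times> (UNIV :: bool set))"
      using finM by (intro card_inj_on_le) auto
    then have c2: "card Psia \<le> 2 * card M" by (simp add: card_cartesian_product)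
    have hitF: "inner_verts P \<inter> F \<noteq> {}" if "P \<in> Psib" for P
    proof
      assume nohit: "inner_verts P \<inter> F = {}"
      have PM: "P \<notin> M" "P \<in> \<Psi>" using that unfolding Psib_def by auto
      have "valid (insert P M)" unfolding valid_def
      proof (rule conjI)
        show "insert P M \<subseteq> \<Psi>" using PM MPsi by auto
        show "\<forall>Q\<in>insert P M. \<forall>R\<in>insert P M. Q \<noteq> R \<longrightarrow> pair Q \<noteq> pair R \<and> inner_verts Q \<inter> inner_verts R = {}"
        proof (intro ballI impI)
        fix Q R assume QR: "Q \<in> insert P M" "R \<in> insert P M" "Q \<noteq> R"
        show "pair Q \<noteq> pair R \<and> inner_verts Q \<inter> inner_verts R = {}"
        proof (cases "Q = P")
          case True
          then have "R \<in> M" using QR by auto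
          then show ?thesis using True that nohit unfolding Psib_def F_def by auto
        next
          case False
          then have QM: "Q \<in> M" using QR by auto
          show ?thesis
          proof (cases "R = P")
            case True
            then show ?thesis using QM that nohit unfolding Psib_def F_def by auto
          next
            case False
            then show ?thesis using QM QR vM unfolding valid_def by auto
          qed
        qed
        qed
      qed
      then have "card (insert P M) \<le> card M" by (rule maxM)
      then show False using PM finM by simp
    qed
    define jj where "jj P = (LEAST j. 0 < j \<and> P ! j \<in> F)" for P
    define pre where "pre P = take (Suc (jj P)) P" for P
    have jjP: "0 < jj P \<and> P ! jj P \<in> F \<and> jj P < length P - 1 \<and> (\<forall>i. 0 < i \<and> i < jj P \<longrightarrow> P ! i \<notin> F)"
      if PP: "P \<in> Psib" for P
    proof -
      obtain x where "x \<in> inner_verts P" "x \<in> F" using hitF[OF PP] by auto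
      then obtain i where i: "0 < i" "i < length P - 1" "P ! i = x" using inner_verts_iff by metis
      have 1: "0 < jj P \<and> P ! jj P \<in> F" unfolding jj_def
        by (rule LeastI[of _ i]) (use i \<open>x \<in> F\<close> in auto)
      have "jj P \<le> i" unfolding jj_def by (rule Least_le) (use i \<open>x \<in> F\<close> in auto)
      moreover have "\<forall>i. 0 < i \<and> i < jj P \<longrightarrow> P ! i \<notin> F"
        unfolding jj_def using not_less_Least by blast
      ultimately show ?thesis using 1 i by auto
    qed
    have preP: "is_path G (pre P) \<and> hd (pre P) = hd P \<and> last (pre P) = P ! jj P \<and>
       path_len (pre P) = jj P \<and> set (pre P) \<subseteq> set P \<and> inner_verts (pre P) \<inter> (K \<union> F) = {}"
      if "P \<in> Psib" for P
    proof -
      have PPsi: "P \<in> \<Psi>" using that Psib_def by auto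
      note j = jjP[OF that]
      note pp = PsiP[OF PPsi]
      have ne: "P \<noteq> []" using pp unfolding is_path_def by blast
      have inn: "inner_verts (pre P) \<inter> (K \<union> F) = {}"
      proof -
        have "x \<notin> K \<union> F" if xin: "x \<in> inner_verts (pre P)" for x
        proof -
          obtain i where i: "0 < i" "i < length (pre P) - 1" "pre P ! i = x"
            using xin inner_verts_iff by metis
          have lp: "length (pre P) = Suc (jj P)" unfolding pre_def using j by auto
          then have "i < jj P" using i by simp
          then have "P ! i = x" using i unfolding pre_def by simp
          moreover have "P ! i \<in> inner_verts P" using inner_verts_iff \<open>i < jj P\<close> j i by (metis less_trans)
          ultimately show ?thesis using j pp \<open>i < jj P\<close> i by auto
        qed
        then show ?thesis by blast
      qed
      show ?thesis using j inn ne is_path_take[of G P "Suc (jj P)"] pp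
        unfolding pre_def by (auto simp: last_take_Suc path_len_def set_take_subset min_def)
    qed
    have injpre: "inj_on pre Psib"
    proof
      fix P P' assume P: "P \<in> Psib" "P' \<in> Psib" "pre P = pre P'"
      have PP: "P \<in> \<Psi>" "P' \<in> \<Psi>" using P unfolding Psib_def by auto
      have hdeq: "hd P = hd P'" using preP[OF P(1)] preP[OF P(2)] P(3) by metis
      show "P = P'"
      proof (rule ccontr)
        assume "P \<noteq> P'"
        then have si: "set P \<inter> set P' = {hd P}" using Psid PP hdeq by blast
        have "last (pre P) \<in> set P \<inter> set P'"
          using preP[OF P(1)] preP[OF P(2)] P(3)
          by (metis IntI is_path_def last_in_set subsetD)
        moreover have "last (pre P) \<noteq> hd P"
        proof -
          have "distinct P" "P \<noteq> []" using PsiP[OF PP(1)] unfolding is_path_def by auto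
          moreover have "hd P = P ! 0" using \<open>P \<noteq> []\<close> by (simp add: hd_conv_nth)
          moreover have "0 < jj P" "jj P < length P" using jjP[OF P(1)] by auto
          ultimately show ?thesis using preP[OF P(1)] nth_eq_iff_index_eq by fastforce
        qed
        ultimately show False using si by auto
      qed
    qed
    have fan': "fanfam G l (K \<union> F) (pre ` Psib)"
      unfolding fanfam_def
    proof (intro conjI)
      show "finite (pre ` Psib)" using finPsi unfolding Psib_def by auto
    next
      show "\<forall>R\<in>pre ` Psib. is_path G R \<and> 1 \<le> path_len R \<and> path_len R \<le> l \<and> hd R \<in> K \<union> F \<and>
          last R \<in> K \<union> F \<and> inner_verts R \<inter> (K \<union> F) = {}"
      proof
      fix R assume "R \<in> pre ` Psib"
      then obtain P where P: "P \<in> Psib" "R = pre P" by auto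
      have PPsi: "P \<in> \<Psi>" using P Psib_def by auto
      show "is_path G R \<and> 1 \<le> path_len R \<and> path_len R \<le> l \<and> hd R \<in> K \<union> F \<and>
          last R \<in> K \<union> F \<and> inner_verts R \<inter> (K \<union> F) = {}"
        using preP[OF P(1)] jjP[OF P(1)] PsiP[OF PPsi] P(2) unfolding path_len_def by auto
      qed
    next
      show "\<forall>R\<in>pre ` Psib. \<forall>R'\<in>pre ` Psib. R \<noteq> R' \<and> hd R = hd R' \<longrightarrow> set R \<inter> set R' = {hd R}"
      proof (intro ballI impI)
      fix R R' assume RR: "R \<in> pre ` Psib" "R' \<in> pre ` Psib" "R \<noteq> R' \<and> hd R = hd R'"
      then obtain P P' where P: "P \<in> Psib" "R = pre P" "P' \<in> Psib" "R' = pre P'" by auto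
      have PP: "P \<in> \<Psi>" "P' \<in> \<Psi>" using P unfolding Psib_def by auto
      have "P \<noteq> P'" using RR P by auto
      moreover have "hd P = hd P'" using RR P preP[OF P(1)] preP[OF P(3)] by auto
      ultimately have "set P \<inter> set P' = {hd P}" using Psid PP by blast
      moreover have "set R \<subseteq> set P" "set R' \<subseteq> set P'" using preP P by auto
      moreover have "hd R \<in> set R" "hd R' \<in> set R'" using preP P unfolding is_path_def
        by (metis hd_in_set)+
      ultimately show "set R \<inter> set R' = {hd R}" using RR P preP[OF P(1)] by auto
      qed
    qed
    have finF': "finite (K \<union> F)" using Suc.prems(2) finF by auto
    have FG: "F \<subseteq> verts G"
    proof
      fix x assume "x \<in> F"
      then obtain P where "P \<in> M" "x \<in> inner_verts P" unfolding F_def by auto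
      then have "x \<in> set P" using set_path_split[of P] PsiP[of P] MPsi
        unfolding is_path_def by blast
      then show "x \<in> verts G" using PsiP[of P] MPsi \<open>P \<in> M\<close> unfolding is_path_def by blast
    qed
    have "real (card (pre ` Psib)) \<le> cf d l * real (card (K \<union> F))"
      using Suc.IH[OF _ finF' _ fan'] Suc.prems(1,3) FG by auto
    moreover have "card (pre ` Psib) = card Psib" using card_image[OF injpre] .
    moreover have "real (card (K \<union> F)) \<le> real (card K) + real (Suc l) * real (card M)"
    proof -
      have u: "card (K \<union> F) \<le> card K + card M * Suc l" using card_Un_le[of K F] cF by linarith
      have "real (card (K \<union> F)) \<le> real (card K + card M * Suc l)" using u by (simp only: of_nat_le_iff)
      then show ?thesis by (simp add: algebra_simps)
    qed
    then have "cf d l * real (card (K \<union> F)) \<le> cf d l * (real (card K) + real (Suc l) * real (card M))"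
      by (rule mult_left_mono[OF _ cf_nonneg[OF d0]])
    ultimately have cb: "real (card Psib) \<le> cf d l * (real (card K) + real (Suc l) * real (card M))"
      by linarith
    have cM: "cf d l * (real (Suc l) * real (card M)) \<le> cf d l * (real (Suc l) * (d * real (card K) / 2))"
      using mbound cf_nonneg[OF d0, of l] by (intro mult_left_mono) auto
    have "real (card \<Psi>) \<le> real (card M) + real (card Psia) + real (card Psib)"
      using c1 by linarith
    also have "\<dots> \<le> 3 * real (card M) + cf d l * (real (card K) + real (Suc l) * real (card M))"
      using c2 cb by linarith
    also have "\<dots> \<le> 3 * (d * real (card K) / 2) + cf d l * (real (card K) + real (Suc l) * (d * real (card K) / 2))"
      using mbound cM by (simp add: distrib_left)
    also have "\<dots> = cf d (Suc l) * real (card K)"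
      by (simp add: algebra_simps)
    finally show ?thesis .
  qed
qed



definition ufan :: "'a graph \<Rightarrow> nat \<Rightarrow> 'a set \<Rightarrow> ('a \<Rightarrow> nat) \<Rightarrow> 'a \<Rightarrow> 'a list set \<Rightarrow> bool" where
  "ufan G R U rk z \<Phi> \<longleftrightarrow> finite \<Phi> \<and>
    (\<forall>P\<in>\<Phi>. is_path G P \<and> hd P = z \<and> 1 \<le> path_len P \<and> path_len P \<le> R \<and> last P \<in> U \<and>
       rk (last P) < rk z \<and> (\<forall>x\<in>inner_verts P. x \<notin> U \<or> rk z < rk x)) \<and>
    (\<forall>P\<in>\<Phi>. \<forall>Q\<in>\<Phi>. P \<noteq> Q \<longrightarrow> set P \<inter> set Q = {z})"

definition bfan :: "'a graph \<Rightarrow> nat \<Rightarrow> 'a set \<Rightarrow> 'a \<Rightarrow> 'a list set \<Rightarrow> bool" where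
  "bfan G R U z \<Phi> \<longleftrightarrow> finite \<Phi> \<and>
    (\<forall>P\<in>\<Phi>. is_path G P \<and> hd P = z \<and> 1 \<le> path_len P \<and> path_len P \<le> R \<and> last P \<in> U \<and>
       inner_verts P \<inter> U = {}) \<and>
    (\<forall>P\<in>\<Phi>. \<forall>Q\<in>\<Phi>. P \<noteq> Q \<longrightarrow> set P \<inter> set Q = {z})"

lemma bfanD: "bfan G R U z \<Phi> \<Longrightarrow> P \<in> \<Phi> \<Longrightarrow>
  is_path G P \<and> hd P = z \<and> 1 \<le> path_len P \<and> path_len P \<le> R \<and> last P \<in> U \<and> inner_verts P \<inter> U = {}"
  unfolding bfan_def by blast

lemma good_vertex:
  assumes G: "is_graph G" and d: "top_grad R G \<le> d" and A: "cf d R \<le> real A"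
    and U: "finite U" "U \<subseteq> verts G" "U \<noteq> {}"
  shows "\<exists>z\<in>U. \<forall>\<Phi>. bfan G R U z \<Phi> \<longrightarrow> card \<Phi> \<le> A"
proof (rule ccontr)
  assume "\<not> ?thesis"
  then have "\<forall>z\<in>U. \<exists>\<Phi>. bfan G R U z \<Phi> \<and> A < card \<Phi>" by (auto simp: not_le)
  from bchoice[OF this] obtain Ph where Ph0: "\<forall>z\<in>U. bfan G R U z (Ph z) \<and> A < card (Ph z)" by blast
  then have Ph: "\<And>z. z \<in> U \<Longrightarrow> bfan G R U z (Ph z) \<and> A < card (Ph z)" by blast
  define \<Psi> where "\<Psi> = (\<Union>z\<in>U. Ph z)"
  have hdPh: "hd P = z" if "z \<in> U" "P \<in> Ph z" for z P using bfanD[OF conjunct1[OF Ph[OF that(1)]] that(2)] by simp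
  have fin: "finite (Ph z)" if "z \<in> U" for z using conjunct1[OF Ph[OF that]] unfolding bfan_def by (rule conjunct1)
  have "fanfam G R U \<Psi>" unfolding fanfam_def
  proof (intro conjI)
    show "finite \<Psi>" unfolding \<Psi>_def using U(1) fin by auto
  next
    show "\<forall>P\<in>\<Psi>. is_path G P \<and> 1 \<le> path_len P \<and> path_len P \<le> R \<and> hd P \<in> U \<and> last P \<in> U \<and> inner_verts P \<inter> U = {}"
    proof
    fix P assume "P \<in> \<Psi>"
    then obtain z where "z \<in> U" "P \<in> Ph z" unfolding \<Psi>_def by auto
    then show "is_path G P \<and> 1 \<le> path_len P \<and> path_len P \<le> R \<and> hd P \<in> U \<and> last P \<in> U \<and> inner_verts P \<inter> U = {}"
      using bfanD[OF conjunct1[OF Ph[OF \<open>z \<in> U\<close>]] \<open>P \<in> Ph z\<close>] \<open>z \<in> U\<close> by simp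
    qed
  next
    show "\<forall>P\<in>\<Psi>. \<forall>Q\<in>\<Psi>. P \<noteq> Q \<and> hd P = hd Q \<longrightarrow> set P \<inter> set Q = {hd P}"
    proof (intro ballI impI)
    fix P Q assume PQ: "P \<in> \<Psi>" "Q \<in> \<Psi>" "P \<noteq> Q \<and> hd P = hd Q"
    then obtain z z' where z: "z \<in> U" "P \<in> Ph z" "z' \<in> U" "Q \<in> Ph z'" unfolding \<Psi>_def by auto
    then have "z = z'" using hdPh PQ by metis
    have pw: "\<forall>P\<in>Ph z. \<forall>Q\<in>Ph z. P \<noteq> Q \<longrightarrow> set P \<inter> set Q = {z}"
    proof -
      have b: "bfan G R U z (Ph z)" using Ph[OF z(1)] by blast
      then show ?thesis unfolding bfan_def by blast
    qed
    have "hd P = z" using hdPh z by blast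
    then show "set P \<inter> set Q = {hd P}" using pw z PQ \<open>z = z'\<close> by blast
    qed
  qed
  then have c: "real (card \<Psi>) \<le> cf d R * real (card U)"
    using fan_lemma[OF G d, of R U \<Psi>] U by auto
  have dj: "\<forall>i\<in>U. \<forall>j\<in>U. i \<noteq> j \<longrightarrow> Ph i \<inter> Ph j = {}"
  proof (intro ballI impI)
    fix i j assume "i \<in> U" "j \<in> U" "i \<noteq> j"
    show "Ph i \<inter> Ph j = {}"
    proof (rule ccontr)
      assume "Ph i \<inter> Ph j \<noteq> {}"
      then obtain P where "P \<in> Ph i" "P \<in> Ph j" by blast
      then show False using hdPh[OF \<open>i \<in> U\<close>] hdPh[OF \<open>j \<in> U\<close>] \<open>i \<noteq> j\<close> by auto
    qed
  qed
  have "card \<Psi> = (\<Sum>z\<in>U. card (Ph z))" unfolding \<Psi>_def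
    using card_UN_disjoint[OF U(1) _ dj] fin by blast
  also have "\<dots> \<ge> (\<Sum>z\<in>U. Suc A)" by (rule sum_mono) (use Ph in \<open>simp add: Suc_leI\<close>)
  finally have "card U * Suc A \<le> card \<Psi>" by simp
  then have "real (card U * Suc A) \<le> real (card \<Psi>)" by (simp only: of_nat_le_iff)
  then have "(real A + 1) * real (card U) \<le> cf d R * real (card U)" using c
    by (simp add: algebra_simps)
  moreover have "real (card U) > 0" using U by (simp add: card_gt_0_iff)
  ultimately have "real A + 1 \<le> cf d R" by (simp add: mult_le_cancel_right)
  then show False using A by simp
qed

lemma ranking_exists:
  assumes G: "is_graph G" and d: "top_grad R G \<le> d" and A: "cf d R \<le> real A"
  shows "finite U \<Longrightarrow> U \<subseteq> verts G \<Longrightarrow> \<exists>rk. inj_on rk U \<and> (\<forall>x\<in>U. rk x < card U) \<and>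
     (\<forall>z\<in>U. \<forall>\<Phi>. ufan G R U rk z \<Phi> \<longrightarrow> card \<Phi> \<le> A)"
proof (induction "card U" arbitrary: U rule: less_induct)
  case less
  show ?case
  proof (cases "U = {}")
    case True then show ?thesis by auto
  next
    case False
    obtain z where z: "z \<in> U" "\<And>\<Phi>. bfan G R U z \<Phi> \<Longrightarrow> card \<Phi> \<le> A"
      using good_vertex[OF G d A less.prems False] by blast
    define U' where "U' = U - {z}"
    have "card U > 0" using z less.prems(1) card_gt_0_iff by blast
    then have cU': "card U' = card U - 1" "card U' < card U" using z less.prems(1) U'_def
      by auto
    obtain rk' where rk': "inj_on rk' U'" "\<forall>x\<in>U'. rk' x < card U'"
      "\<forall>w\<in>U'. \<forall>\<Phi>. ufan G R U' rk' w \<Phi> \<longrightarrow> card \<Phi> \<le> A"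
      using less.hyps[OF cU'(2)] less.prems U'_def by auto
    define rk where "rk x = (if x = z then card U - 1 else rk' x)" for x
    have rkU: "\<forall>x\<in>U. rk x < card U"
    proof
      fix x assume "x \<in> U"
      show "rk x < card U"
      proof (cases "x = z")
        case True then show ?thesis using \<open>card U > 0\<close> rk_def by simp
      next
        case False then have "rk' x < card U'" using rk'(2) \<open>x \<in> U\<close> U'_def by blast
        then show ?thesis using False cU' rk_def by simp
      qed
    qed
    have rkz: "\<forall>x\<in>U. rk x \<le> rk z"
    proof
      fix x assume "x \<in> U"
      show "rk x \<le> rk z"
      proof (cases "x = z")
        case True then show ?thesis by simp
      next
        case False then have "rk' x < card U'" using rk'(2) \<open>x \<in> U\<close> U'_def by blast
        then show ?thesis using False cU' rk_def by simp
      qed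
    qed
    have rklt: "\<forall>x\<in>U'. rk x < rk z" using rk' cU' unfolding rk_def U'_def by auto
    have "inj_on rk U"
      unfolding inj_on_def
    proof (intro ballI impI)
      fix x y assume xy: "x \<in> U" "y \<in> U" "rk x = rk y"
      show "x = y"
      proof (cases "x = z \<or> y = z")
        case True
        have "rk x < rk z" if "x \<in> U" "x \<noteq> z" for x using rklt that unfolding U'_def by blast
        then show ?thesis using xy True by (metis less_irrefl)
      next
        case False then show ?thesis using xy rk'(1) unfolding rk_def U'_def inj_on_def by auto
      qed
    qed
    moreover have "\<forall>w\<in>U. \<forall>\<Phi>. ufan G R U rk w \<Phi> \<longrightarrow> card \<Phi> \<le> A"
    proof (intro ballI allI impI)
      fix w \<Phi> assume w: "w \<in> U" and uf: "ufan G R U rk w \<Phi>"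
      have U3: "finite \<Phi> \<and>
        (\<forall>P\<in>\<Phi>. is_path G P \<and> hd P = w \<and> 1 \<le> path_len P \<and> path_len P \<le> R \<and> last P \<in> U \<and>
           rk (last P) < rk w \<and> (\<forall>x\<in>inner_verts P. x \<notin> U \<or> rk w < rk x)) \<and>
        (\<forall>P\<in>\<Phi>. \<forall>Q\<in>\<Phi>. P \<noteq> Q \<longrightarrow> set P \<inter> set Q = {w})"
        using uf unfolding ufan_def .
      note finPhi = conjunct1[OF U3]
      note paths = conjunct1[OF conjunct2[OF U3]]
      note pw = conjunct2[OF conjunct2[OF U3]]
      show "card \<Phi> \<le> A"
      proof (cases "w = z")
        case True
        have "bfan G R U z \<Phi>" unfolding bfan_def
        proof (intro conjI)
          show "finite \<Phi>" by (rule finPhi)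
        next
          show "\<forall>P\<in>\<Phi>. is_path G P \<and> hd P = z \<and> 1 \<le> path_len P \<and> path_len P \<le> R \<and> last P \<in> U \<and>
             inner_verts P \<inter> U = {}"
          proof
          fix P assume "P \<in> \<Phi>"
          then have p: "is_path G P \<and> hd P = z \<and> 1 \<le> path_len P \<and> path_len P \<le> R \<and> last P \<in> U \<and>
             (\<forall>x\<in>inner_verts P. x \<notin> U \<or> rk z < rk x)" using paths True by blast
          then have "inner_verts P \<inter> U = {}" using rkz by (force simp: not_le)
          then show "is_path G P \<and> hd P = z \<and> 1 \<le> path_len P \<and> path_len P \<le> R \<and> last P \<in> U \<and>
             inner_verts P \<inter> U = {}" using p by blast
          qed
        next
          show "\<forall>P\<in>\<Phi>. \<forall>Q\<in>\<Phi>. P \<noteq> Q \<longrightarrow> set P \<inter> set Q = {z}" using pw True by blast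
        qed
        then show ?thesis using z(2) by blast
      next
        case False
        then have wU': "w \<in> U'" using w U'_def by auto
        have rkw: "rk w = rk' w" using False rk_def by simp
        have "ufan G R U' rk' w \<Phi>" unfolding ufan_def
        proof (intro conjI)
          show "finite \<Phi>" by (rule finPhi)
        next
          show "\<forall>P\<in>\<Phi>. is_path G P \<and> hd P = w \<and> 1 \<le> path_len P \<and> path_len P \<le> R \<and> last P \<in> U' \<and>
             rk' (last P) < rk' w \<and> (\<forall>x\<in>inner_verts P. x \<notin> U' \<or> rk' w < rk' x)"
          proof
          fix P assume "P \<in> \<Phi>"
          then have p: "is_path G P \<and> hd P = w \<and> 1 \<le> path_len P \<and> path_len P \<le> R \<and> last P \<in> U \<and>
             rk (last P) < rk w \<and> (\<forall>x\<in>inner_verts P. x \<notin> U \<or> rk w < rk x)"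
            using paths by blast
          have "rk w < rk z" using rklt wU' by blast
          then have "last P \<noteq> z" using p by auto
          then have l: "last P \<in> U' \<and> rk' (last P) < rk' w" using p rkw unfolding U'_def rk_def by auto
          have "\<forall>x\<in>inner_verts P. x \<notin> U' \<or> rk' w < rk' x"
          proof
            fix x assume xi: "x \<in> inner_verts P"
            show "x \<notin> U' \<or> rk' w < rk' x"
            proof (cases "x \<in> U'")
              case True then have "x \<in> U" "x \<noteq> z" using U'_def by auto
              then have "rk w < rk x" using p xi by blast
              then show ?thesis using \<open>x \<noteq> z\<close> rkw rk_def by simp
            qed simp
          qed
          then show "is_path G P \<and> hd P = w \<and> 1 \<le> path_len P \<and> path_len P \<le> R \<and> last P \<in> U' \<and>
             rk' (last P) < rk' w \<and> (\<forall>x\<in>inner_verts P. x \<notin> U' \<or> rk' w < rk' x)" using p l by blast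
          qed
        next
          show "\<forall>P\<in>\<Phi>. \<forall>Q\<in>\<Phi>. P \<noteq> Q \<longrightarrow> set P \<inter> set Q = {w}" by (rule pw)
        qed
        then show ?thesis using rk'(3) wU' by blast
      qed
    qed
    ultimately show ?thesis using rkU by blast
  qed
qed



definition admfan :: "'a graph \<Rightarrow> nat \<Rightarrow> ('a \<Rightarrow> nat) \<Rightarrow> 'a \<Rightarrow> 'a list set \<Rightarrow> bool" where
  "admfan G R rk z \<Phi> \<longleftrightarrow> finite \<Phi> \<and>
    (\<forall>P\<in>\<Phi>. is_path G P \<and> hd P = z \<and> 1 \<le> path_len P \<and> path_len P \<le> R \<and>
       rk (last P) < rk z \<and> (\<forall>x\<in>inner_verts P. rk z < rk x)) \<and>
    (\<forall>P\<in>\<Phi>. \<forall>Q\<in>\<Phi>. P \<noteq> Q \<longrightarrow> set P \<inter> set Q = {z})"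

definition wr :: "'a graph \<Rightarrow> ('a \<Rightarrow> nat) \<Rightarrow> 'a \<Rightarrow> nat \<Rightarrow> 'a set" where
  "wr G rk z k = {u. \<exists>P. is_path G P \<and> hd P = z \<and> last P = u \<and> path_len P \<le> k \<and>
                      (\<forall>x\<in>set P. rk u \<le> rk x)}"

primrec Bnd :: "nat \<Rightarrow> nat \<Rightarrow> nat \<Rightarrow> nat" where
  "Bnd A R 0 = 1"
| "Bnd A R (Suc k) = 1 + A * Suc R * Bnd A R k"

lemma path_setD: "is_path G P \<Longrightarrow> P \<noteq> [] \<and> distinct P \<and> set P \<subseteq> verts G"
  unfolding is_path_def by blast

lemma wr_sub: "wr G rk z k \<subseteq> verts G"
proof
  fix u assume "u \<in> wr G rk z k"
  then obtain P where "is_path G P" "last P = u" unfolding wr_def by blast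
  then show "u \<in> verts G" using path_setD[of G P] last_in_set by blast
qed

lemma wr_empty: "z \<notin> verts G \<Longrightarrow> wr G rk z k = {}"
proof -
  assume z: "z \<notin> verts G"
  have "False" if uw: "u \<in> wr G rk z k" for u
  proof -
    obtain P where "is_path G P" "hd P = z" using uw unfolding wr_def by blast
    then show False using path_setD[of G P] hd_in_set z by blast
  qed
  then show ?thesis by blast
qed

lemma wr_bound:
  assumes G: "is_graph G" and inj: "inj_on rk (verts G)"
    and adm: "\<forall>z\<in>verts G. \<forall>\<Phi>. admfan G R rk z \<Phi> \<longrightarrow> card \<Phi> \<le> A"
  shows "k \<le> R \<Longrightarrow> card (wr G rk z k) \<le> Bnd A R k"
proof (induction k arbitrary: z)
  case 0
  have "wr G rk z 0 \<subseteq> {z}"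
  proof
    fix u assume "u \<in> wr G rk z 0"
    then obtain P where P: "is_path G P" "hd P = z" "last P = u" "path_len P \<le> 0" unfolding wr_def by blast
    then have "P \<noteq> []" using path_setD by blast
    moreover have "length P \<le> 1" using P(4) unfolding path_len_def by simp
    ultimately obtain a where "P = [a]" by (cases P) auto
    then show "u \<in> {z}" using P by simp
  qed
  then have "card (wr G rk z 0) \<le> card {z}" by (intro card_mono) auto
  then show ?case by simp
next
  case (Suc k)
  show ?case
  proof (cases "z \<in> verts G")
    case False
    then show ?thesis using wr_empty[OF False] by simp
  next
    case zV: True
    have finG: "finite (verts G)" using G unfolding is_graph_def by blast
    have "admfan G R rk z {}" unfolding admfan_def by simp
    moreover have "\<forall>\<Phi>. admfan G R rk z \<Phi> \<longrightarrow> card \<Phi> < Suc A" using adm zV by (simp add: less_Suc_eq_le)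
    ultimately obtain \<Phi> where aF: "admfan G R rk z \<Phi>" and maxF: "\<And>\<Phi>'. admfan G R rk z \<Phi>' \<Longrightarrow> card \<Phi>' \<le> card \<Phi>"
      using Lattices_Big.ex_has_greatest_nat[of "admfan G R rk z" "{}" card "Suc A"] by blast
    have A3: "finite \<Phi> \<and>
      (\<forall>P\<in>\<Phi>. is_path G P \<and> hd P = z \<and> 1 \<le> path_len P \<and> path_len P \<le> R \<and>
         rk (last P) < rk z \<and> (\<forall>x\<in>inner_verts P. rk z < rk x)) \<and>
      (\<forall>P\<in>\<Phi>. \<forall>Q\<in>\<Phi>. P \<noteq> Q \<longrightarrow> set P \<inter> set Q = {z})" using aF unfolding admfan_def .
    note finF = conjunct1[OF A3]
    note pathsF = conjunct1[OF conjunct2[OF A3]]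
    note pwF = conjunct2[OF conjunct2[OF A3]]
    have cF: "card \<Phi> \<le> A" using adm zV aF by blast
    define Z where "Z = (\<Union>P\<in>\<Phi>. set P)"
    have finZ: "finite Z" unfolding Z_def using finF by auto
    have "card Z \<le> (\<Sum>P\<in>\<Phi>. card (set P))" unfolding Z_def by (rule card_UN_le[OF finF])
    also have "\<dots> \<le> (\<Sum>P\<in>\<Phi>. Suc R)"
    proof (rule sum_mono)
      fix P assume "P \<in> \<Phi>"
      then have "path_len P \<le> R" using pathsF by blast
      then show "card (set P) \<le> Suc R" using card_length[of P] unfolding path_len_def by linarith
    qed
    also have "\<dots> = card \<Phi> * Suc R" by simp
    also have "\<dots> \<le> A * Suc R" using cF by (rule mult_right_mono) simp
    finally have cZ: "card Z \<le> A * Suc R" .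
    have sub: "wr G rk z (Suc k) \<subseteq> insert z (\<Union>w\<in>Z. wr G rk w k)"
    proof
      fix u assume "u \<in> wr G rk z (Suc k)"
      then obtain P where P: "is_path G P" "hd P = z" "last P = u" "path_len P \<le> Suc k"
        "\<forall>x\<in>set P. rk u \<le> rk x" unfolding wr_def by blast
      show "u \<in> insert z (\<Union>w\<in>Z. wr G rk w k)"
      proof (cases "u = z")
        case True then show ?thesis by simp
      next
        case uz: False
        note Pp = path_setD[OF P(1)]
        define n where "n = length P"
        have hd0: "P ! 0 = z" using P(2) Pp by (simp add: hd_conv_nth)
        have lastn: "P ! (n - 1) = u" using P(3) Pp unfolding n_def by (simp add: last_conv_nth)
        have n2: "n \<ge> 2"
        proof (rule ccontr)
          assume "\<not> n \<ge> 2"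
          moreover have "n \<ge> 1" using Pp n_def by (cases P) auto
          ultimately have "n = 1" by simp
          then show False using hd0 lastn uz by simp
        qed
        have uV: "u \<in> verts G" using P(3) Pp last_in_set by blast
        have "rk u \<le> rk z" using P(5) P(2) Pp hd_in_set by blast
        moreover have "rk u \<noteq> rk z" using inj uV zV uz unfolding inj_on_def by blast
        ultimately have ruz: "rk u < rk z" by simp
        define j where "j = (LEAST j. rk (P ! j) < rk z)"
        have j1: "rk (P ! j) < rk z" unfolding j_def by (rule LeastI[of _ "n - 1"]) (use lastn ruz in simp)
        have j2: "j \<le> n - 1" unfolding j_def by (rule Least_le) (use lastn ruz in simp)
        have j0: "0 < j" using j1 hd0 by (cases j) auto
        have jn: "j < n" using j2 n2 by simp
        have mid: "rk z < rk (P ! i)" if "0 < i" "i < j" for i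
        proof -
          have "\<not> rk (P ! i) < rk z" using that(2) unfolding j_def by (rule not_less_Least)
          moreover have "P ! i \<noteq> z"
            using that jn hd0 Pp nth_eq_iff_index_eq[of P i 0] unfolding n_def by auto
          moreover have "P ! i \<in> verts G" using Pp that jn unfolding n_def by (meson less_trans nth_mem subsetD)
          ultimately show ?thesis using inj zV unfolding inj_on_def by (metis nat_neq_iff)
        qed
        define pre where "pre = take (Suc j) P"
        have lpre: "length pre = Suc j" unfolding pre_def using jn n_def by simp
        have prenth: "pre ! i = P ! i" if "i \<le> j" for i unfolding pre_def using that by simp
        have pre_path: "is_path G pre \<and> hd pre = z \<and> 1 \<le> path_len pre \<and> path_len pre \<le> R \<and>
           rk (last pre) < rk z \<and> (\<forall>x\<in>inner_verts pre. rk z < rk x)"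
        proof (intro conjI)
          show "is_path G pre" unfolding pre_def by (rule is_path_take[OF P(1)]) simp
          show "hd pre = z" unfolding pre_def using P(2) by simp
          show "1 \<le> path_len pre" using lpre j0 unfolding path_len_def by simp
          show "path_len pre \<le> R" using lpre j2 P(4) Suc.prems unfolding path_len_def n_def by simp
          have "last pre = P ! j" unfolding pre_def using jn n_def last_take_Suc by metis
          then show "rk (last pre) < rk z" using j1 by simp
          show "\<forall>x\<in>inner_verts pre. rk z < rk x"
          proof
            fix x assume "x \<in> inner_verts pre"
            then obtain i where i: "0 < i" "i < length pre - 1" "pre ! i = x" using inner_verts_iff by metis
            then have "i < j" using lpre by simp
            then show "rk z < rk x" using mid[OF i(1)] i prenth by simp
          qed
        qed
        have setpre: "set pre = {P ! i | i. i \<le> j}"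
        proof -
          have "set pre = {pre ! i | i. i < length pre}" by (simp add: set_conv_nth)
          also have "\<dots> = {P ! i | i. i \<le> j}" using lpre prenth by (auto simp: less_Suc_eq_le) (metis le_imp_less_Suc)
          finally show ?thesis .
        qed
        have "\<exists>i. 0 < i \<and> i \<le> j \<and> P ! i \<in> Z"
        proof (rule ccontr)
          assume nz: "\<not> ?thesis"
          have notin: "pre \<notin> \<Phi>"
          proof
            assume "pre \<in> \<Phi>"
            then have "P ! j \<in> Z" unfolding Z_def using setpre by blast
            then show False using nz j0 by blast
          qed
          have "admfan G R rk z (insert pre \<Phi>)" unfolding admfan_def
          proof (intro conjI)
            show "finite (insert pre \<Phi>)" using finF by simp
            show "\<forall>P\<in>insert pre \<Phi>. is_path G P \<and> hd P = z \<and> 1 \<le> path_len P \<and> path_len P \<le> R \<and>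
               rk (last P) < rk z \<and> (\<forall>x\<in>inner_verts P. rk z < rk x)" using pre_path pathsF by blast
            have capQ: "set pre \<inter> set Q = {z}" if "Q \<in> \<Phi>" for Q
            proof -
              have "set Q \<subseteq> Z" using that unfolding Z_def by blast
              moreover have "x = z" if xs: "x \<in> set pre" "x \<in> Z" for x
              proof -
                obtain i where "x = P ! i" "i \<le> j" using xs(1) setpre by blast
                then show ?thesis using nz xs(2) hd0 by (cases i) auto
              qed
              moreover have "z \<in> set pre" using pre_path path_setD hd_in_set by metis
              moreover have "z \<in> set Q" using that pathsF path_setD hd_in_set by metis
              ultimately show ?thesis by blast
            qed
            show "\<forall>P\<in>insert pre \<Phi>. \<forall>Q\<in>insert pre \<Phi>. P \<noteq> Q \<longrightarrow> set P \<inter> set Q = {z}"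
              using capQ pwF by blast
          qed
          then have "card (insert pre \<Phi>) \<le> card \<Phi>" by (rule maxF)
          then show False using notin finF by simp
        qed
        then obtain i where i: "0 < i" "i \<le> j" "P ! i \<in> Z" by blast
        have "u \<in> wr G rk (P ! i) k" unfolding wr_def
        proof (intro CollectI exI[of _ "drop i P"] conjI)
          have "i < length P" using i jn n_def by simp
          then show "is_path G (drop i P)" by (rule is_path_drop[OF P(1)])
          show "hd (drop i P) = P ! i" using \<open>i < length P\<close> by (rule hd_drop_conv_nth)
          show "last (drop i P) = u" using \<open>i < length P\<close> P(3) by simp
          have e1: "path_len (drop i P) = length P - 1 - i" unfolding path_len_def by simp
          have e2: "length P - 1 \<le> Suc k" using P(4) unfolding path_len_def .
          show "path_len (drop i P) \<le> k" unfolding e1 using e2 i(1) by linarith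
          show "\<forall>x\<in>set (drop i P). rk u \<le> rk x" using P(5) set_drop_subset[of i P] by blast
        qed
        then show ?thesis using i by blast
      qed
    qed
    have finU: "finite (\<Union>w\<in>Z. wr G rk w k)" using finZ finG wr_sub by (meson finite_UN_I finite_subset)
    have "card (wr G rk z (Suc k)) \<le> card (insert z (\<Union>w\<in>Z. wr G rk w k))"
      using sub finU by (intro card_mono) auto
    also have "\<dots> \<le> Suc (card (\<Union>w\<in>Z. wr G rk w k))" using finU by (simp add: card_insert_if)
    also have "card (\<Union>w\<in>Z. wr G rk w k) \<le> (\<Sum>w\<in>Z. card (wr G rk w k))" by (rule card_UN_le[OF finZ])
    also have "\<dots> \<le> (\<Sum>w\<in>Z. Bnd A R k)" using Suc by (intro sum_mono) simp
    also have "\<dots> = card Z * Bnd A R k" by simp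
    also have "\<dots> \<le> A * Suc R * Bnd A R k" using cZ by simp
    finally show ?thesis by simp
  qed
qed



lemma path_is_walk: "is_path G p \<Longrightarrow> is_walk G p"
  unfolding is_path_alt is_walk_def by blast

lemma walk_append:
  assumes a: "is_walk G a" and b: "is_walk G b" and ab: "last a = hd b"
  shows "is_walk G (a @ tl b) \<and> hd (a @ tl b) = hd a \<and> last (a @ tl b) = last b \<and>
         set (a @ tl b) \<subseteq> set a \<union> set b \<and> length (a @ tl b) = length a + length b - 1"
proof -
  have ane: "a \<noteq> []" and bne: "b \<noteq> []" using a b unfolding is_walk_def by auto
  obtain hb tb where bb: "b = hb # tb" using bne by (cases b) auto
  have sa: "successively (adj G) a" using a unfolding is_walk_def by blast
  have sb: "successively (adj G) (hb # tb)" using b bb unfolding is_walk_def by blast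
  then have stb: "successively (adj G) tb" and j: "tb = [] \<or> adj G hb (hd tb)"
    by (auto simp: successively_Cons)
  have "successively (adj G) (a @ tb)"
    using sa stb j ab bb by (auto simp: successively_append_iff)
  moreover have "set (a @ tb) \<subseteq> verts G" using a b bb unfolding is_walk_def by auto
  ultimately have w: "is_walk G (a @ tb)" using ane unfolding is_walk_def by simp
  have l: "last (a @ tb) = last b" using ab bb by (cases "tb = []") auto
  show ?thesis using w l ane bb by auto
qed

lemma ex_min_rank:
  assumes "finite S" "S \<noteq> {}"
  shows "\<exists>x\<in>S. \<forall>y\<in>S. (rk :: 'a \<Rightarrow> nat) x \<le> rk y"
proof -
  obtain s where "s \<in> S" using assms by blast
  then show ?thesis using ex_has_least_nat[of "\<lambda>x. x \<in> S" s rk] by blast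
qed

lemma cops_win_of_order:
  assumes G: "is_graph G" and inj: "inj_on rk (verts G)" and bnd: "\<forall>x\<in>verts G. rk x < N"
    and W: "\<forall>z\<in>verts G. card (wr G rk z (2 * r)) \<le> B"
  shows "cops_win r B G"
  unfolding cops_win_def
proof (intro exI[of _ "\<lambda>h. wr G rk (last h) (2 * r)"] conjI allI impI)
  fix h
  show "wr G rk (last h) (2 * r) \<subseteq> verts G" by (rule wr_sub)
  show "card (wr G rk (last h) (2 * r)) \<le> B"
  proof (cases "last h \<in> verts G")
    case True then show ?thesis using W by blast
  next
    case False then show ?thesis using wr_empty[OF False] by simp
  qed
next
  fix v assume cp: "consistent_play G r (\<lambda>h. wr G rk (last h) (2 * r)) v"
  define \<sigma> where "\<sigma> = (\<lambda>h::'a list. wr G rk (last h) (2 * r))"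
  have cs: "cop_set \<sigma> v (Suc n) = wr G rk (v n) (2 * r)" for n
    unfolding cop_set_def \<sigma>_def by simp
  have mv0: "\<forall>i\<ge>1. robber_move G r (cop_set \<sigma> v (i - 1) \<inter> cop_set \<sigma> v i) (v (i - 1)) (v i)"
    using cp unfolding consistent_play_def \<sigma>_def by (rule conjunct2)
  have mv: "robber_move G r (cop_set \<sigma> v n \<inter> cop_set \<sigma> v (Suc n)) (v n) (v (Suc n))" for n
    using mv0[rule_format, of "Suc n"] by simp
  have "\<forall>n. \<exists>p. is_path G p \<and> hd p = v n \<and> last p = v (Suc n) \<and> path_len p \<le> r \<and>
               set p \<inter> (cop_set \<sigma> v n \<inter> cop_set \<sigma> v (Suc n)) = {}"
    using mv unfolding robber_move_def by blast
  then obtain p where p: "\<And>n. is_path G (p n) \<and> hd (p n) = v n \<and> last (p n) = v (Suc n) \<and> path_len (p n) \<le> r \<and>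
               set (p n) \<inter> (cop_set \<sigma> v n \<inter> cop_set \<sigma> v (Suc n)) = {}"
    using choice[of "\<lambda>n p. is_path G p \<and> hd p = v n \<and> last p = v (Suc n) \<and> path_len p \<le> r \<and>
               set p \<inter> (cop_set \<sigma> v n \<inter> cop_set \<sigma> v (Suc n)) = {}"] by blast
  have "\<forall>n. \<exists>x. x \<in> set (p n) \<and> (\<forall>y\<in>set (p n). rk x \<le> rk y)"
  proof
    fix n
    have "p n \<noteq> []" using conjunct1[OF p[of n]] unfolding is_path_def by blast
    then have "set (p n) \<noteq> {}" by simp
    then show "\<exists>x. x \<in> set (p n) \<and> (\<forall>y\<in>set (p n). rk x \<le> rk y)"
      using ex_min_rank[of "set (p n)" rk] by (simp add: Bex_def)
  qed
  from choice[OF this] obtain x where x0: "\<forall>n. x n \<in> set (p n) \<and> (\<forall>y\<in>set (p n). rk (x n) \<le> rk y)"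
    by blast
  then have x: "\<And>n. x n \<in> set (p n) \<and> (\<forall>y\<in>set (p n). rk (x n) \<le> rk y)" by blast
  have inc: "rk (x n) < rk (x (Suc n))" for n
  proof (rule ccontr)
    assume "\<not> rk (x n) < rk (x (Suc n))"
    then have le: "rk (x (Suc n)) \<le> rk (x n)" by simp
    define x' where "x' = x (Suc n)"
    define q' where "q' = p (Suc n)"
    have q'p: "is_path G q'" "hd q' = v (Suc n)" "path_len q' \<le> r"
      "set q' \<inter> (cop_set \<sigma> v (Suc n) \<inter> cop_set \<sigma> v (Suc (Suc n))) = {}"
      using p[of "Suc n"] unfolding q'_def by auto
    have x'q: "x' \<in> set q'" "\<forall>y\<in>set q'. rk x' \<le> rk y" using x[of "Suc n"] unfolding x'_def q'_def by auto
    obtain q where q: "q < length q'" "q' ! q = x'" using x'q(1) by (metis in_set_conv_nth)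
    define t where "t = take (Suc q) q'"
    have tp: "is_path G t" unfolding t_def by (rule is_path_take[OF q'p(1)]) simp
    have thd: "hd t = v (Suc n)" unfolding t_def using q'p(2) by simp
    have tlast: "last t = x'" unfolding t_def using q last_take_Suc by metis
    have tlen: "length t = Suc q" unfolding t_def using q by simp
    have tset: "set t \<subseteq> set q'" unfolding t_def by (rule set_take_subset)
    have tpl: "path_len t \<le> r" using tlen q q'p(3) unfolding path_len_def by simp
    have in1: "x' \<in> wr G rk (v (Suc n)) (2 * r)" unfolding wr_def
      using tp thd tlast tpl tset x'q(2) by (intro CollectI exI[of _ t]) auto
    define a where "a = p n"
    have ap: "is_path G a" "hd a = v n" "last a = v (Suc n)" "path_len a \<le> r"
      using p[of n] unfolding a_def by auto
    have aset: "\<forall>y\<in>set a. rk x' \<le> rk y" using x[of n] le unfolding a_def x'_def by force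
    note wa = walk_append[OF path_is_walk[OF ap(1)] path_is_walk[OF tp]]
    have wa': "is_walk G (a @ tl t) \<and> hd (a @ tl t) = hd a \<and> last (a @ tl t) = last t \<and>
         set (a @ tl t) \<subseteq> set a \<union> set t \<and> length (a @ tl t) = length a + length t - 1"
      using wa ap(3) thd by simp
    obtain pp where pp: "is_path G pp" "hd pp = hd (a @ tl t)" "last pp = last (a @ tl t)"
      "length pp \<le> length (a @ tl t)" "set pp \<subseteq> set (a @ tl t)"
      using walk_to_path[of G "a @ tl t"] wa' by blast
    have "length a \<ge> 1" using path_setD[OF ap(1)] by (cases a) auto
    then have "path_len pp \<le> 2 * r" using pp(4) wa' ap(4) tpl unfolding path_len_def by simp
    moreover have "\<forall>y\<in>set pp. rk x' \<le> rk y" using pp(5) wa' aset x'q(2) tset by blast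
    ultimately have in0: "x' \<in> wr G rk (v n) (2 * r)" unfolding wr_def
      using pp(1,2,3) wa' ap(2) tlast by (intro CollectI exI[of _ pp]) auto
    have "x' \<in> cop_set \<sigma> v (Suc n) \<inter> cop_set \<sigma> v (Suc (Suc n))" using in0 in1 cs by simp
    then show False using q'p(4) x'q(1) by blast
  qed
  have ge: "n \<le> rk (x n)" for n
  proof (induction n)
    case (Suc n) then show ?case using inc[of n] by simp
  qed simp
  have "x N \<in> verts G" using x[of N] path_setD[OF conjunct1[OF p[of N]]] by blast
  then have "rk (x N) < N" using bnd by blast
  then show "\<exists>i\<ge>1. v i \<in> cop_set (\<lambda>h. wr G rk (last h) (2 * r)) v i" using ge[of N] by simp
qed

theorem mainTheorem3:
  fixes C :: "'a graph set"
  assumes "\<forall>G\<in>C. is_graph G"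
  shows "bounded_expansion C \<longleftrightarrow> (\<forall>r::nat. \<exists>K::nat. \<forall>G\<in>C. copw r G \<le> K)"
proof
  assume be: "bounded_expansion C"
  show "\<forall>r::nat. \<exists>K::nat. \<forall>G\<in>C. copw r G \<le> K"
  proof
    fix r :: nat
    define R where "R = 2 * r"
    obtain d where d: "\<forall>G\<in>C. top_grad R G \<le> d" using be unfolding bounded_expansion_def by blast
    define A where "A = nat \<lceil>cf d R\<rceil>"
    have A: "cf d R \<le> real A" unfolding A_def by (rule real_nat_ceiling_ge)
    define K where "K = Bnd A R R"
    have "copw r G \<le> K" if GC: "G \<in> C" for G
    proof -
      have G: "is_graph G" using assms GC by blast
      have finV: "finite (verts G)" using G unfolding is_graph_def by blast
      obtain rk where rk: "inj_on rk (verts G)" "\<forall>x\<in>verts G. rk x < card (verts G)"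
        "\<forall>z\<in>verts G. \<forall>\<Phi>. ufan G R (verts G) rk z \<Phi> \<longrightarrow> card \<Phi> \<le> A"
        using ranking_exists[OF G d[rule_format, OF GC] A finV] by blast
      have adm: "\<forall>z\<in>verts G. \<forall>\<Phi>. admfan G R rk z \<Phi> \<longrightarrow> card \<Phi> \<le> A"
      proof (intro ballI allI impI)
        fix z \<Phi> assume z: "z \<in> verts G" and af: "admfan G R rk z \<Phi>"
        have "ufan G R (verts G) rk z \<Phi>" unfolding ufan_def
        proof (intro conjI)
          show "finite \<Phi>" using af unfolding admfan_def by blast
          show "\<forall>P\<in>\<Phi>. \<forall>Q\<in>\<Phi>. P \<noteq> Q \<longrightarrow> set P \<inter> set Q = {z}" using af unfolding admfan_def by blast
          show "\<forall>P\<in>\<Phi>. is_path G P \<and> hd P = z \<and> 1 \<le> path_len P \<and> path_len P \<le> R \<and> last P \<in> verts G \<and>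
             rk (last P) < rk z \<and> (\<forall>x\<in>inner_verts P. x \<notin> verts G \<or> rk z < rk x)"
          proof
            fix P assume "P \<in> \<Phi>"
            then have PP: "is_path G P \<and> hd P = z \<and> 1 \<le> path_len P \<and> path_len P \<le> R \<and>
               rk (last P) < rk z \<and> (\<forall>x\<in>inner_verts P. rk z < rk x)" using af unfolding admfan_def by blast
            then have "last P \<in> verts G" using path_setD[of G P] last_in_set by blast
            then show "is_path G P \<and> hd P = z \<and> 1 \<le> path_len P \<and> path_len P \<le> R \<and> last P \<in> verts G \<and>
             rk (last P) < rk z \<and> (\<forall>x\<in>inner_verts P. x \<notin> verts G \<or> rk z < rk x)" using PP by blast
          qed
        qed
        then show "card \<Phi> \<le> A" using rk(3) z by blast
      qed
      have "\<forall>z\<in>verts G. card (wr G rk z (2 * r)) \<le> K"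
        using wr_bound[OF G rk(1) adm, of R] unfolding K_def R_def by simp
      then have "cops_win r K G" using cops_win_of_order[OF G rk(1) rk(2)] by blast
      then show ?thesis unfolding copw_def by (rule Least_le)
    qed
    then show "\<exists>K::nat. \<forall>G\<in>C. copw r G \<le> K" by blast
  qed
next
  assume h: "\<forall>r::nat. \<exists>K::nat. \<forall>G\<in>C. copw r G \<le> K"
  show "bounded_expansion C" unfolding bounded_expansion_def
  proof
    fix r :: nat
    obtain K where K: "\<forall>G\<in>C. copw (Suc r) G \<le> K" using h by blast
    have "\<forall>G\<in>C. top_grad r G \<le> 2 * real K" using top_grad_le_of_copw K assms by blast
    then show "\<exists>c::real. \<forall>G\<in>C. top_grad r G \<le> c" by blast
  qed
qed

end
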